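(* Let $A\in\mathbb{C}^{m\times n}$ have rank $r$, $B\in\mathbb{C}^{m\times n}$ have rank $s$, and $E=B-A$. Then $$\|B^{\dagger}-A^{\dagger}\|_{F}^{2}\leq\min\big\{\gamma_{1}+\|B^{\dagger}EA^{\dagger}\|_{F}^{2},\ \gamma_{2}+\|A^{\dagger}EB^{\dagger}\|_{F}^{2}\big\},$$ where $$\gamma_{1}:=\|A^{\dagger}\|_{2}^{2}\Big(\|A^{\dagger}E\|_{F}^{2}-\frac{\|A^{\dagger}EB^{\dagger}\|_{F}^{2}}{\|B^{\dagger}\|_{2}^{2}}\Big)+\|B^{\dagger}\|_{2}^{2}\Big(\|EB^{\dagger}\|_{F}^{2}-\frac{\|A^{\dagger}EB^{\dagger}\|_{F}^{2}}{\|A^{\dagger}\|_{2}^{2}}\Big),$$ $$\gamma_{2}:=\|A^{\dagger}\|_{2}^{2}\Big(\|EA^{\dagger}\|_{F}^{2}-\frac{\|B^{\dagger}EA^{\dagger}\|_{F}^{2}}{\|B^{\dagger}\|_{2}^{2}}\Big)+\|B^{\dagger}\|_{2}^{2}\Big(\|B^{\dagger}E\|_{F}^{2}-\frac{\|B^{\dagger}EA^{\dagger}\|_{F}^{2}}{\|A^{\dagger}\|_{2}^{2}}\Big).$$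
   Context: $M^{\dagger}$ denotes the Moore–Penrose inverse of $M$, $\|\cdot\|_{2}$ the spectral norm and $\|\cdot\|_{F}$ the Frobenius norm. *)

theory Defs
  imports "HOL-Analysis.Analysis"
begin

definition conj_transpose :: "complex^'n^'m \<Rightarrow> complex^'m^'n" where
  "conj_transpose A = (\<chi> i j. cnj (A $ j $ i))"

definition mp_inverse :: "complex^'n^'m \<Rightarrow> complex^'m^'n" where
  "mp_inverse A = (THE X. A ** X ** A = A \<and> X ** A ** X = X \<and>
                         conj_transpose (A ** X) = A ** X \<and>
                         conj_transpose (X ** A) = X ** A)"

definition frob_norm :: "complex^'n^'m \<Rightarrow> real" where
  "frob_norm A = sqrt (\<Sum>i\<in>UNIV. \<Sum>j\<in>UNIV. (cmod (A $ i $ j))\<^sup>2)"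

definition spec_norm :: "complex^'n^'m \<Rightarrow> real" where
  "spec_norm A = onorm (\<lambda>x. A *v x)"

end

theory Submission
  imports Defs
begin



abbreviation ct :: "complex^'n^'m \<Rightarrow> complex^'m^'n" where "ct \<equiv> conj_transpose"

lemma ct_nth[simp]: "ct A $ i $ j = cnj (A $ j $ i)"
  by (simp add: conj_transpose_def)

lemma ct_ct[simp]: "ct (ct A) = A"
  by (simp add: vec_eq_iff)

lemma ct_mult: "ct (A ** B) = ct B ** ct A"
  by (simp add: vec_eq_iff matrix_matrix_mult_def mult.commute)

lemma ct_add: "ct (A + B) = ct A + ct B"
  by (simp add: vec_eq_iff)

lemma ct_diff: "ct (A - B) = ct A - ct B"
  by (simp add: vec_eq_iff)

lemma ct_uminus: "ct (- A) = - ct A"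
  by (simp add: vec_eq_iff)

lemma ct_zero[simp]: "ct 0 = 0"
  by (simp add: vec_eq_iff)

lemma ct_mat[simp]: "ct (mat 1) = mat 1"
  by (simp add: vec_eq_iff mat_def)

lemma ct_scaleR: "ct (r *\<^sub>R A) = r *\<^sub>R ct A"
  by (simp add: vec_eq_iff)

lemma mm_scaleR_left: "(r *\<^sub>R A) ** B = r *\<^sub>R (A ** B)"
  for A :: "complex^'n^'m"
  by (simp add: vec_eq_iff matrix_matrix_mult_def) (simp add: scaleR_conv_of_real sum_distrib_left mult.assoc)

lemma mm_scaleR_right: "A ** (r *\<^sub>R B) = r *\<^sub>R (A ** B)"
  for A :: "complex^'n^'m"
  by (simp add: vec_eq_iff matrix_matrix_mult_def) (simp add: scaleR_conv_of_real sum_distrib_left mult.assoc mult.left_commute)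

lemma mm_diff_left: "A ** (B - C) = A ** B - A ** C"
  for A :: "complex^'n^'m"
  by (simp add: vec_eq_iff matrix_matrix_mult_def sum_subtractf right_diff_distrib)

lemma mm_diff_right: "(B - C) ** A = B ** A - C ** A"
  for A :: "complex^'n^'m"
  by (simp add: vec_eq_iff matrix_matrix_mult_def sum_subtractf left_diff_distrib)

lemma mm_add_right: "(B + C) ** A = B ** A + C ** A"
  for A :: "complex^'n^'m"
  by (simp add: vec_eq_iff matrix_matrix_mult_def sum.distrib distrib_right)

lemma mm_uminus_left: "A ** (- B) = - (A ** B)"
  for A :: "complex^'n^'m"
  by (simp add: vec_eq_iff matrix_matrix_mult_def sum_negf)

lemma mm_uminus_right: "(- B) ** A = - (B ** A)"
  for A :: "complex^'n^'m"
  by (simp add: vec_eq_iff matrix_matrix_mult_def sum_negf)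

lemma ctX_X_zero: fixes X :: "complex^'n^'m" assumes "ct X ** X = 0" shows "X = 0"
proof -
  have "X $ i $ j = 0" for i j
  proof -
    have "(ct X ** X) $ j $ j = 0" using assms by simp
    hence "(\<Sum>k\<in>UNIV. cnj (X $ k $ j) * X $ k $ j) = 0"
      by (simp add: matrix_matrix_mult_def)
    moreover have "cnj z * z = complex_of_real ((cmod z)\<^sup>2)" for z
      by (metis complex_norm_square mult.commute)
    ultimately have "(\<Sum>k\<in>UNIV. complex_of_real ((cmod (X $ k $ j))\<^sup>2)) = 0"
      by simp
    hence "(\<Sum>k\<in>UNIV. (cmod (X $ k $ j))\<^sup>2) = 0"
      by (metis of_real_eq_0_iff of_real_sum)
    hence "\<forall>k\<in>UNIV. (cmod (X $ k $ j))\<^sup>2 = 0"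
      by (subst sum_nonneg_eq_0_iff[symmetric]) auto
    thus ?thesis by simp
  qed
  thus ?thesis by (simp add: vec_eq_iff)
qed




primrec mpow :: "complex^'n^'n \<Rightarrow> nat \<Rightarrow> complex^'n^'n" where
  "mpow H 0 = mat 1" | "mpow H (Suc k) = H ** mpow H k"

lemma mpow_comm: "H ** mpow H k = mpow H k ** H"
proof (induction k)
  case (Suc k)
  have "mpow H (Suc k) ** H = H ** (mpow H k ** H)" by (simp add: matrix_mul_assoc)
  also have "\<dots> = H ** mpow H (Suc k)" using Suc by simp
  finally show ?case by simp
qed simp

lemma mm_sum_atMost: "H ** (\<Sum>k\<le>N. f k) = (\<Sum>k\<le>N. H ** f k)"
  for H :: "complex^'n^'m" and N :: nat
  by (induction N) (simp_all add: matrix_add_ldistrib)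

lemma poly_comm: "H ** (\<Sum>k\<le>N. c k *\<^sub>R mpow H k) = (\<Sum>k\<le>N. c k *\<^sub>R mpow H k) ** H"
  by (induction N) (simp_all add: matrix_add_ldistrib mm_add_right mm_scaleR_left mm_scaleR_right mpow_comm matrix_mul_assoc)

lemma poly_shift: "(\<Sum>k\<le>Suc N. c k *\<^sub>R mpow H k) = c 0 *\<^sub>R mat 1 + H ** (\<Sum>k\<le>N. c (Suc k) *\<^sub>R mpow H k)"
  apply (subst sum.atMost_Suc_shift)
  apply (simp add: mm_sum_atMost mm_scaleR_right del: sum.atMost_Suc)
  done

lemma annih:
  fixes H :: "complex^'n^'n"
  assumes herm: "ct H = H"
  shows "(\<exists>k\<le>N. c k \<noteq> 0) \<Longrightarrow> H ** (\<Sum>k\<le>N. c k *\<^sub>R mpow H k) = 0 \<Longrightarrow> \<exists>K. H ** K ** H = H"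
proof (induction N arbitrary: c)
  case 0
  then have "c 0 *\<^sub>R H = 0" by (simp add: mm_scaleR_right)
  with 0 have "H = 0" by simp
  then show ?case by (intro exI[of _ 0]) simp
next
  case (Suc N)
  define S where "S = (\<Sum>k\<le>N. c (Suc k) *\<^sub>R mpow H k)"
  have eq: "c 0 *\<^sub>R H + H ** (H ** S) = 0"
  proof -
    have "H ** (c 0 *\<^sub>R mat 1 + H ** S) = 0" using Suc.prems(2) by (simp only: poly_shift S_def)
    then show ?thesis by (simp add: matrix_add_ldistrib mm_scaleR_right)
  qed
  have comm: "H ** S = S ** H" unfolding S_def by (rule poly_comm)
  show ?case
  proof (cases "c 0 = 0")
    case False
    have h: "c 0 *\<^sub>R H = - (H ** (H ** S))"
      using eq by (simp add: eq_neg_iff_add_eq_0)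
    have "H = (1 / c 0) *\<^sub>R (c 0 *\<^sub>R H)" using False by simp
    also have "\<dots> = (- 1 / c 0) *\<^sub>R (H ** (H ** S))" using h by simp
    also have "\<dots> = (- 1 / c 0) *\<^sub>R (H ** (S ** H))" by (simp only: comm)
    also have "\<dots> = H ** ((- 1 / c 0) *\<^sub>R S) ** H"
      by (simp only: mm_scaleR_left mm_scaleR_right matrix_mul_assoc)
    finally show ?thesis by metis
  next
    case True
    then have "H ** (H ** S) = 0" using eq by simp
    then have "ct (H ** S) ** (H ** S) = 0"
      by (simp add: ct_mult herm matrix_mul_assoc[symmetric])
    then have HS: "H ** S = 0" by (rule ctX_X_zero)
    from Suc.prems(1) True obtain k where "k \<le> Suc N" "c k \<noteq> 0" by auto
    with True obtain k' where "k' \<le> N" "c (Suc k') \<noteq> 0" by (cases k) auto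
    then show ?thesis using Suc.IH[of "\<lambda>k. c (Suc k)"] HS S_def by auto
  qed
qed




lemma power_relation:
  fixes H :: "complex^'n^'n"
  shows "\<exists>N c. (\<exists>k\<le>N. c k \<noteq> 0) \<and> (\<Sum>k\<le>N. c k *\<^sub>R mpow H k) = 0"
proof (cases "inj_on (mpow H) {..DIM(complex^'n^'n)}")
  case True
  define D where "D = DIM(complex^'n^'n)"
  define S where "S = mpow H ` {..D}"
  have "card S = Suc D" using True unfolding S_def D_def by (simp add: card_image)
  hence "\<not> independent S" using independent_bound[of S] unfolding D_def by auto
  then have "\<exists>T u. finite T \<and> T \<subseteq> S \<and> (\<Sum>v\<in>T. u v *\<^sub>R v) = 0 \<and> (\<exists>v\<in>T. u v \<noteq> 0)"
    by (simp add: real_vector.dependent_explicit) (elim exE conjE; intro exI conjI; assumption)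
  then obtain T u where T: "finite T" "T \<subseteq> S" "(\<Sum>v\<in>T. u v *\<^sub>R v) = 0" and "\<exists>v\<in>T. u v \<noteq> 0"
    by auto
  then obtain v where v: "v \<in> T" "u v \<noteq> 0" by auto
  define c where "c k = (if mpow H k \<in> T then u (mpow H k) else 0)" for k
  define K where "K = {k \<in> {..D}. mpow H k \<in> T}"
  have TK: "T = mpow H ` K" using T(2) unfolding K_def S_def by auto
  have injK: "inj_on (mpow H) K" using True unfolding K_def D_def by (rule inj_on_subset) auto
  have "(\<Sum>k\<le>D. c k *\<^sub>R mpow H k) = (\<Sum>k\<in>K. c k *\<^sub>R mpow H k)"
    by (rule sum.mono_neutral_right) (auto simp: K_def c_def)
  also have "\<dots> = (\<Sum>k\<in>K. u (mpow H k) *\<^sub>R mpow H k)"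
    by (rule sum.cong) (auto simp: K_def c_def)
  also have "\<dots> = (\<Sum>v\<in>T. u v *\<^sub>R v)"
    unfolding TK by (simp add: sum.reindex[OF injK])
  finally have "(\<Sum>k\<le>D. c k *\<^sub>R mpow H k) = 0" using T(3) by simp
  moreover obtain k where "k \<in> K" "v = mpow H k" using v TK by auto
  hence "k \<le> D" "c k \<noteq> 0" using v by (auto simp: K_def c_def)
  ultimately show ?thesis by blast
next
  case False
  then obtain i j where ij: "i \<le> DIM(complex^'n^'n)" "j \<le> DIM(complex^'n^'n)" "i \<noteq> j" "mpow H i = mpow H j"
    unfolding inj_on_def by auto
  define c where "c k = (if k = i then 1 else 0) - (if k = j then 1 else (0::real))" for k
  have "(\<Sum>k\<le>DIM(complex^'n^'n). c k *\<^sub>R mpow H k)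
      = (\<Sum>k\<le>DIM(complex^'n^'n). (if k = i then mpow H k else 0)) - (\<Sum>k\<le>DIM(complex^'n^'n). (if k = j then mpow H k else 0))"
    unfolding c_def scaleR_left_diff_distrib sum_subtractf[symmetric]
    by (rule sum.cong) auto
  also have "\<dots> = 0" using ij by (simp add: sum.delta)
  finally show ?thesis using ij c_def by (intro exI[of _ "DIM(complex^'n^'n)"] exI[of _ c]) auto
qed

lemma one_inverse:
  fixes H :: "complex^'n^'n"
  assumes "ct H = H"
  shows "\<exists>K. H ** K ** H = H"
proof -
  obtain N c where "\<exists>k\<le>N. c k \<noteq> 0" "(\<Sum>k\<le>N. c k *\<^sub>R mpow H k) = 0"
    using power_relation by blast
  then show ?thesis using annih[OF assms, of N c] by simp
qed




definition penrose :: "complex^'n^'m \<Rightarrow> complex^'m^'n \<Rightarrow> bool" where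
  "penrose A X \<longleftrightarrow> A ** X ** A = A \<and> X ** A ** X = X \<and>
                         ct (A ** X) = A ** X \<and> ct (X ** A) = X ** A"

lemma ginv_cancel:
  fixes A :: "complex^'n^'m"
  assumes "ct A ** A ** G ** (ct A ** A) = ct A ** A"
  shows "A ** G ** (ct A ** A) = A"
proof -
  define N where "N = A ** G ** (ct A ** A) - A"
  have N2: "N = A ** (G ** (ct A ** A) - mat 1)"
    unfolding N_def by (simp add: mm_diff_left matrix_mul_assoc)
  have "ct A ** N = 0"
    unfolding N_def using assms by (simp add: mm_diff_left matrix_mul_assoc)
  hence "ct N ** N = 0"
    by (subst (2) N2, simp add: N2 ct_mult matrix_mul_assoc[symmetric])
  hence "N = 0" by (rule ctX_X_zero)
  thus ?thesis unfolding N_def by simp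
qed

lemma inv13:
  fixes A :: "complex^'n^'m"
  shows "\<exists>Y. A ** Y ** A = A \<and> ct (A ** Y) = A ** Y"
proof -
  define H where "H = ct A ** A"
  have hH: "ct H = H" unfolding H_def by (simp add: ct_mult)
  obtain G where G: "H ** G ** H = H" using one_inverse[OF hH] by blast
  have G': "H ** ct G ** H = H"
    using arg_cong[OF G, of ct] by (simp add: ct_mult hH matrix_mul_assoc)
  have c1: "A ** G ** H = A" using ginv_cancel[of A G] G unfolding H_def by simp
  have c2: "A ** ct G ** H = A" using ginv_cancel[of A "ct G"] G' unfolding H_def by simp
  have c3: "H ** G ** ct A = ct A"
    using arg_cong[OF c2, of ct] by (simp add: ct_mult hH matrix_mul_assoc)
  have "ct (A ** (G ** ct A)) = A ** ct G ** ct A"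
    by (simp add: ct_mult matrix_mul_assoc)
  also have "\<dots> = A ** ct G ** (H ** G ** ct A)" using c3 by simp
  also have "\<dots> = (A ** ct G ** H) ** G ** ct A" by (simp add: matrix_mul_assoc)
  also have "\<dots> = A ** (G ** ct A)" using c2 by (simp add: matrix_mul_assoc)
  finally have "ct (A ** (G ** ct A)) = A ** (G ** ct A)" .
  moreover have "A ** (G ** ct A) ** A = A"
    using c1 unfolding H_def by (simp add: matrix_mul_assoc)
  ultimately show ?thesis by blast
qed

lemma inv14:
  fixes A :: "complex^'n^'m"
  shows "\<exists>Z. A ** Z ** A = A \<and> ct (Z ** A) = Z ** A"
proof -
  obtain W where W: "ct A ** W ** ct A = ct A" "ct (ct A ** W) = ct A ** W"
    using inv13[of "ct A"] by blast
  have "A ** ct W ** A = A"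
    using arg_cong[OF W(1), of ct] by (simp add: ct_mult matrix_mul_assoc)
  moreover have "ct (ct W ** A) = ct W ** A"
    using W(2) by (simp add: ct_mult)
  ultimately show ?thesis by blast
qed

lemma penrose_exists:
  fixes A :: "complex^'n^'m"
  shows "\<exists>X. penrose A X"
proof -
  obtain Y where Y: "A ** Y ** A = A" "ct (A ** Y) = A ** Y" using inv13 by blast
  obtain Z where Z: "A ** Z ** A = A" "ct (Z ** A) = Z ** A" using inv14 by blast
  define X where "X = Z ** A ** Y"
  have 1: "A ** X ** A = A" unfolding X_def using Y Z by (simp add: matrix_mul_assoc)
  have AX: "A ** X = A ** Y" unfolding X_def using Z by (simp add: matrix_mul_assoc)
  have XA: "X ** A = Z ** A" unfolding X_def
    by (metis Y(1) matrix_mul_assoc)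
  have 2: "X ** A ** X = X"
    by (metis X_def Z(1) XA matrix_mul_assoc)
  show ?thesis unfolding penrose_def using 1 2 AX XA Y Z by metis
qed

lemma penrose_unique:
  fixes A :: "complex^'n^'m"
  assumes X: "penrose A X" and Y: "penrose A Y"
  shows "X = Y"
proof -
  have X1: "A ** X ** A = A" and X2: "X ** A ** X = X" and X3: "ct (A ** X) = A ** X"
    and X4: "ct (X ** A) = X ** A" using X unfolding penrose_def by auto
  have Y1: "A ** Y ** A = A" and Y2: "Y ** A ** Y = Y" and Y3: "ct (A ** Y) = A ** Y"
    and Y4: "ct (Y ** A) = Y ** A" using Y unfolding penrose_def by auto
  have "X = X ** (A ** X)" using X2 by (simp add: matrix_mul_assoc)
  also have "\<dots> = X ** ct (A ** X)" using X3 by simp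
  also have "\<dots> = X ** ct X ** ct (A ** Y ** A)" using Y1 by (simp add: ct_mult matrix_mul_assoc)
  also have "\<dots> = X ** (ct (A ** X) ** ct (A ** Y))" by (simp add: ct_mult matrix_mul_assoc)
  also have "\<dots> = X ** A ** X ** A ** Y" using X3 Y3 by (simp add: matrix_mul_assoc)
  also have "\<dots> = X ** A ** Y" using X2 by simp
  finally have eX: "X = X ** A ** Y" .
  have "Y = (Y ** A) ** Y" using Y2 by simp
  also have "\<dots> = ct (Y ** A) ** Y" using Y4 by simp
  also have "\<dots> = ct (A ** X ** A) ** ct Y ** Y" using X1 by (simp add: ct_mult matrix_mul_assoc)
  also have "\<dots> = (ct (X ** A) ** ct (Y ** A)) ** Y" by (simp add: ct_mult matrix_mul_assoc)
  also have "\<dots> = X ** A ** (Y ** A ** Y)" using X4 Y4 by (simp add: matrix_mul_assoc)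
  also have "\<dots> = X ** A ** Y" using Y2 by simp
  finally show ?thesis using eX by simp
qed

lemma mp_penrose: "penrose A (mp_inverse A)"
proof -
  have "\<exists>!X. penrose A X" using penrose_exists penrose_unique by metis
  hence "penrose A (THE X. penrose A X)" by (rule theI')
  thus ?thesis unfolding mp_inverse_def penrose_def by simp
qed




definition fro2 :: "complex^'n^'m \<Rightarrow> real" where
  "fro2 M = (\<Sum>i\<in>UNIV. \<Sum>j\<in>UNIV. (cmod (M $ i $ j))\<^sup>2)"

definition cip :: "complex^'n^'m \<Rightarrow> complex^'n^'m \<Rightarrow> complex" where
  "cip X Y = (\<Sum>i\<in>UNIV. \<Sum>j\<in>UNIV. cnj (X $ i $ j) * Y $ i $ j)"

lemma fro2_nonneg: "0 \<le> fro2 M"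
  unfolding fro2_def by (intro sum_nonneg) auto

lemma frob_sq: "(frob_norm M)\<^sup>2 = fro2 M"
  unfolding frob_norm_def fro2_def[symmetric] using fro2_nonneg by simp

lemma cmod_add_sq: "(cmod (x + y))\<^sup>2 = (cmod x)\<^sup>2 + (cmod y)\<^sup>2 + 2 * Re (cnj x * y)"
  by (simp only: cmod_power2) (simp add: power2_sum algebra_simps)

lemma fro2_add: "fro2 (X + Y) = fro2 X + fro2 Y + 2 * Re (cip X Y)"
  unfolding fro2_def cip_def by (simp add: cmod_add_sq sum.distrib sum_distrib_left)

lemma fro2_uminus: "fro2 (- X) = fro2 X"
  unfolding fro2_def by simp

lemma fro2_ct: "fro2 (ct X) = fro2 X"
  unfolding fro2_def by (simp, rule sum.swap)

lemma triple_swap: "(\<Sum>i\<in>A. \<Sum>j\<in>B. \<Sum>k\<in>C. g i j k) = (\<Sum>k\<in>C. \<Sum>j\<in>B. \<Sum>i\<in>A. g i j k)"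
proof -
  have "(\<Sum>i\<in>A. \<Sum>j\<in>B. \<Sum>k\<in>C. g i j k) = (\<Sum>i\<in>A. \<Sum>k\<in>C. \<Sum>j\<in>B. g i j k)"
    by (rule sum.cong[OF refl], rule sum.swap)
  also have "\<dots> = (\<Sum>k\<in>C. \<Sum>i\<in>A. \<Sum>j\<in>B. g i j k)" by (rule sum.swap)
  also have "\<dots> = (\<Sum>k\<in>C. \<Sum>j\<in>B. \<Sum>i\<in>A. g i j k)"
    by (rule sum.cong[OF refl], rule sum.swap)
  finally show ?thesis .
qed

lemma cip_left: "cip X (M ** Y) = cip (ct M ** X) Y"
proof -
  have "cip X (M ** Y) = (\<Sum>i\<in>UNIV. \<Sum>j\<in>UNIV. \<Sum>k\<in>UNIV. cnj (X$i$j) * M$i$k * Y$k$j)"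
    unfolding cip_def matrix_matrix_mult_def by (simp add: sum_distrib_left mult.assoc)
  also have "\<dots> = (\<Sum>k\<in>UNIV. \<Sum>j\<in>UNIV. \<Sum>i\<in>UNIV. cnj (X$i$j) * M$i$k * Y$k$j)"
    by (rule triple_swap)
  also have "\<dots> = cip (ct M ** X) Y"
    unfolding cip_def matrix_matrix_mult_def by (simp add: sum_distrib_left mult_ac)
  finally show ?thesis .
qed

lemma cip_right: "cip X (Y ** M) = cip (X ** ct M) Y"
proof -
  have "cip X (Y ** M) = (\<Sum>i\<in>UNIV. \<Sum>j\<in>UNIV. \<Sum>k\<in>UNIV. cnj (X$i$j) * M$k$j * Y$i$k)"
    unfolding cip_def matrix_matrix_mult_def by (simp add: sum_distrib_left mult_ac)
  also have "\<dots> = (\<Sum>i\<in>UNIV. \<Sum>k\<in>UNIV. \<Sum>j\<in>UNIV. cnj (X$i$j) * M$k$j * Y$i$k)"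
    by (rule sum.cong[OF refl], rule sum.swap)
  also have "\<dots> = cip (X ** ct M) Y"
    unfolding cip_def matrix_matrix_mult_def by (simp add: sum_distrib_left mult_ac)
  finally show ?thesis .
qed




lemma mv_linear: "linear (\<lambda>x. M *v x)" for M :: "complex^'n^'m"
proof (rule linearI)
  show "M *v (x + y) = M *v x + M *v y" for x y by (rule matrix_vector_right_distrib)
  show "M *v (r *\<^sub>R x) = r *\<^sub>R (M *v x)" for r x
    by (simp add: vec_eq_iff matrix_vector_mult_def) (simp add: scaleR_conv_of_real sum_distrib_left mult_ac)
qed

lemma mv_bl: "bounded_linear (\<lambda>x. M *v x)" for M :: "complex^'n^'m"
  using mv_linear by (simp add: linear_conv_bounded_linear)

lemma spec_nonneg: "0 \<le> spec_norm M"
  unfolding spec_norm_def by (rule onorm_pos_le[OF mv_bl])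

lemma spec_bound: "norm (M *v x) \<le> spec_norm M * norm x"
  unfolding spec_norm_def by (rule onorm[OF mv_bl])

lemma norm_vec_sq: "(norm (v::complex^'n))\<^sup>2 = (\<Sum>i\<in>UNIV. (cmod (v $ i))\<^sup>2)"
  unfolding norm_vec_def L2_set_def by (simp add: sum_nonneg)

lemma fro2_cols: "fro2 M = (\<Sum>j\<in>UNIV. (norm (column j M))\<^sup>2)"
  unfolding fro2_def norm_vec_sq column_def by (simp, rule sum.swap)

lemma column_mult: "column j (M ** N) = M *v column j N"
  by (simp add: vec_eq_iff column_def matrix_matrix_mult_def matrix_vector_mult_def)

lemma fro2_mult_left: "fro2 (M ** N) \<le> (spec_norm M)\<^sup>2 * fro2 N"
proof -
  have "fro2 (M ** N) = (\<Sum>j\<in>UNIV. (norm (M *v column j N))\<^sup>2)"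
    by (simp add: fro2_cols column_mult)
  also have "\<dots> \<le> (\<Sum>j\<in>UNIV. (spec_norm M)\<^sup>2 * (norm (column j N))\<^sup>2)"
  proof (rule sum_mono)
    fix j
    have "norm (M *v column j N) \<le> spec_norm M * norm (column j N)" by (rule spec_bound)
    hence "(norm (M *v column j N))\<^sup>2 \<le> (spec_norm M * norm (column j N))\<^sup>2"
      by (rule power_mono) simp
    thus "(norm (M *v column j N))\<^sup>2 \<le> (spec_norm M)\<^sup>2 * (norm (column j N))\<^sup>2"
      by (simp add: power_mult_distrib)
  qed
  also have "\<dots> = (spec_norm M)\<^sup>2 * fro2 N"
    by (simp add: fro2_cols sum_distrib_left)
  finally show ?thesis .
qed

lemma inner_complex_cnj: "inner (z::complex) w = Re (cnj z * w)"
  by (simp add: inner_complex_def)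

lemma inner_ct: "inner (ct M *v x) y = inner x (M *v y)"
proof -
  have e1: "inner (ct M *v x) y = Re (\<Sum>j\<in>UNIV. cnj ((ct M *v x)$j) * y$j)"
    by (simp only: inner_vec_def inner_complex_cnj Re_sum)
  have e2: "inner x (M *v y) = Re (\<Sum>i\<in>UNIV. cnj (x$i) * (M *v y)$i)"
    by (simp only: inner_vec_def inner_complex_cnj Re_sum)
  have "(\<Sum>j\<in>UNIV. cnj ((ct M *v x)$j) * y$j) = (\<Sum>j\<in>UNIV. \<Sum>i\<in>UNIV. M$i$j * cnj (x$i) * y$j)"
    by (simp add: matrix_vector_mult_def sum_distrib_left mult_ac)
  also have "\<dots> = (\<Sum>i\<in>UNIV. \<Sum>j\<in>UNIV. M$i$j * cnj (x$i) * y$j)"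
    by (rule sum.swap)
  also have "\<dots> = (\<Sum>i\<in>UNIV. cnj (x$i) * (M *v y)$i)"
    by (simp add: matrix_vector_mult_def sum_distrib_left mult_ac)
  finally show ?thesis using e1 e2 by simp
qed

lemma spec_ct_le: "spec_norm (ct M) \<le> spec_norm M"
proof -
  have "norm (ct M *v x) \<le> spec_norm M * norm x" for x
  proof -
    let ?y = "ct M *v x"
    have "(norm ?y)\<^sup>2 = inner ?y ?y" by (simp add: power2_norm_eq_inner)
    also have "\<dots> = inner x (M *v ?y)" by (rule inner_ct)
    also have "\<dots> \<le> norm x * norm (M *v ?y)" by (rule norm_cauchy_schwarz)
    also have "\<dots> \<le> norm x * (spec_norm M * norm ?y)"
      by (rule mult_left_mono[OF spec_bound]) simp
    finally have h: "norm ?y * norm ?y \<le> (spec_norm M * norm x) * norm ?y"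
      by (simp add: power2_eq_square mult_ac)
    show ?thesis
    proof (cases "norm ?y = 0")
      case True thus ?thesis using spec_nonneg[of M] by simp
    next
      case False
      hence "0 < norm ?y" by simp
      with h show ?thesis by (simp add: mult_le_cancel_right)
    qed
  qed
  thus ?thesis unfolding spec_norm_def
    by (intro onorm_bound) (simp_all add: spec_norm_def[symmetric] spec_nonneg)
qed

lemma spec_ct: "spec_norm (ct M) = spec_norm M"
  using spec_ct_le[of M] spec_ct_le[of "ct M"] by simp

lemma fro2_mult_right: "fro2 (N ** M) \<le> fro2 N * (spec_norm M)\<^sup>2"
proof -
  have "fro2 (N ** M) = fro2 (ct M ** ct N)" using fro2_ct[of "N ** M"] by (simp add: ct_mult)
  also have "\<dots> \<le> (spec_norm (ct M))\<^sup>2 * fro2 (ct N)" by (rule fro2_mult_left)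
  finally show ?thesis by (simp add: spec_ct fro2_ct mult.commute)
qed




lemma div_le_aux: "(x::real) \<le> c * y \<Longrightarrow> 0 \<le> c \<Longrightarrow> 0 \<le> y \<Longrightarrow> x / c \<le> y"
  by (cases "c = 0") (auto simp: divide_le_eq mult.commute)

lemma cip_zero_left[simp]: "cip 0 Y = 0"
  by (simp add: cip_def)

lemma main_bound:
  fixes A B E :: "complex^'n^'m"
  assumes EBA: "E = B - A"
  defines "a \<equiv> mp_inverse A" and "b \<equiv> mp_inverse B"
  defines "\<alpha> \<equiv> (spec_norm a)\<^sup>2" and "\<beta> \<equiv> (spec_norm b)\<^sup>2"
  shows "fro2 (b - a) \<le> \<alpha> * (fro2 (a ** E) - fro2 (a ** E ** b) / \<beta>)
                        + \<beta> * (fro2 (E ** b) - fro2 (a ** E ** b) / \<alpha>)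
                        + fro2 (b ** E ** a)"
proof -
  have pa: "penrose A a" unfolding a_def by (rule mp_penrose)
  have pb: "penrose B b" unfolding b_def by (rule mp_penrose)
  have a1: "A ** a ** A = A" and a2: "a ** A ** a = a" and a3: "ct (A ** a) = A ** a"
    and a4: "ct (a ** A) = a ** A" using pa unfolding penrose_def by auto
  have b1: "B ** b ** B = B" and b2: "b ** B ** b = b" and b3: "ct (B ** b) = B ** b"
    and b4: "ct (b ** B) = b ** B" using pb unfolding penrose_def by auto
  define P where "P = A ** a"
  define Q where "Q = b ** B"
  define I1 :: "complex^'m^'m" where "I1 = mat 1"
  define I2 :: "complex^'n^'n" where "I2 = mat 1"
  have ctP: "ct P = P" unfolding P_def by (rule a3)
  have ctQ: "ct Q = Q" unfolding Q_def by (rule b4)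
  have PP: "P ** P = P" unfolding P_def using a1 by (simp add: matrix_mul_assoc)
  have QQ: "Q ** Q = Q" unfolding Q_def using b2 by (simp add: matrix_mul_assoc)
  have aP: "a ** P = a" unfolding P_def using a2 by (simp add: matrix_mul_assoc)
  have Qb: "Q ** b = b" unfolding Q_def using b2 by (simp add: matrix_mul_assoc)
  have ctIP: "ct (I1 - P) = I1 - P" by (simp add: ct_diff ctP I1_def)
  have ctIQ: "ct (I2 - Q) = I2 - Q" by (simp add: ct_diff ctQ I2_def)
  have P_IP: "P ** (I1 - P) = 0" by (simp add: mm_diff_left PP I1_def)
  have IP_P: "(I1 - P) ** P = 0" by (simp add: mm_diff_right PP I1_def)
  have Q_IQ: "Q ** (I2 - Q) = 0" by (simp add: mm_diff_left QQ I2_def)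
  have IQ_Q: "(I2 - Q) ** Q = 0" by (simp add: mm_diff_right QQ I2_def)
  have IQ_b: "(I2 - Q) ** b = 0" by (simp add: mm_diff_right Qb I2_def)
  have a_IP: "a ** (I1 - P) = 0" by (simp add: mm_diff_left aP I1_def)

  define T1 where "T1 = - (b ** E ** a)"
  define T2 where "T2 = b ** (I1 - P)"
  define T3 where "T3 = - ((I2 - Q) ** a)"
  have decomp: "b - a = T1 + T2 + T3"
    unfolding T1_def T2_def T3_def EBA P_def Q_def I1_def I2_def
    by (simp add: mm_diff_left mm_diff_right matrix_mul_assoc)

  have ctA_IP: "ct A ** (I1 - P) = 0"
  proof -
    have "ct A ** P = ct (P ** A)" by (simp add: ct_mult ctP)
    also have "\<dots> = ct A" using a1 by (simp add: P_def)
    finally have "ct A ** P = ct A" .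
    thus ?thesis by (simp add: mm_diff_left I1_def)
  qed
  have IQ_ctB: "(I2 - Q) ** ct B = 0"
  proof -
    have "Q ** ct B = ct (B ** Q)" by (simp add: ct_mult ctQ)
    also have "\<dots> = ct B" using b1 by (simp add: Q_def matrix_mul_assoc)
    finally have "Q ** ct B = ct B" .
    thus ?thesis by (simp add: mm_diff_right I2_def)
  qed
  have T2alt: "T2 = b ** (ct b ** ct E ** (I1 - P))"
  proof -
    have "T2 = b ** B ** b ** (I1 - P)" unfolding T2_def using b2 by simp
    also have "\<dots> = b ** ct (B ** b) ** (I1 - P)" using b3 by (simp add: matrix_mul_assoc)
    also have "\<dots> = b ** ct b ** (ct A + ct E) ** (I1 - P)"
      by (simp add: ct_mult EBA ct_diff matrix_mul_assoc)
    also have "\<dots> = b ** ct b ** ct E ** (I1 - P)"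
      using ctA_IP by (simp add: matrix_add_ldistrib mm_add_right matrix_mul_assoc[symmetric])
    finally show ?thesis by (simp add: matrix_mul_assoc)
  qed
  have T3alt: "T3 = ((I2 - Q) ** ct E ** ct a) ** a"
  proof -
    have "(I2 - Q) ** a = (I2 - Q) ** (ct (a ** A) ** a)" using a2 a4 by simp
    also have "\<dots> = (I2 - Q) ** (ct B - ct E) ** ct a ** a"
      by (simp add: ct_mult EBA ct_diff matrix_mul_assoc)
    also have "\<dots> = - ((I2 - Q) ** ct E ** ct a ** a)"
      using IQ_ctB by (simp add: mm_diff_left mm_diff_right matrix_mul_assoc[symmetric])
    finally show ?thesis unfolding T3_def by (simp add: matrix_mul_assoc)
  qed

  have IQT1: "(I2 - Q) ** T1 = 0"
    unfolding T1_def using IQ_b by (simp add: mm_uminus_left matrix_mul_assoc)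
  have IQT2: "(I2 - Q) ** T2 = 0"
    unfolding T2_def using IQ_b by (simp add: matrix_mul_assoc)
  have "cip (T1 + T2) T3 = cip ((I2 - Q) ** (T1 + T2)) (- a)"
    unfolding T3_def by (simp add: mm_uminus_left[symmetric] cip_left ctIQ)
  hence o1: "cip (T1 + T2) T3 = 0" by (simp add: matrix_add_ldistrib IQT1 IQT2)
  have "T1 ** (I1 - P) = 0"
    unfolding T1_def using a_IP by (simp add: mm_uminus_right matrix_mul_assoc[symmetric])
  hence o2: "cip T1 T2 = 0" unfolding T2_def by (simp add: cip_right ctIP)
  have fD: "fro2 (b - a) = fro2 T1 + fro2 T2 + fro2 T3"
    unfolding decomp by (simp add: fro2_add o1 o2)

  have al: "0 \<le> \<alpha>" and be: "0 \<le> \<beta>" unfolding \<alpha>_def \<beta>_def by simp_all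
  have f1: "fro2 T1 = fro2 (b ** E ** a)" unfolding T1_def by (simp add: fro2_uminus)
  have "fro2 T2 \<le> \<beta> * fro2 (ct b ** ct E ** (I1 - P))"
    unfolding T2alt \<beta>_def by (rule fro2_mult_left)
  also have "fro2 (ct b ** ct E ** (I1 - P)) = fro2 ((I1 - P) ** E ** b)"
    using fro2_ct[of "(I1 - P) ** E ** b"] by (simp add: ct_mult ctIP matrix_mul_assoc)
  finally have f2: "fro2 T2 \<le> \<beta> * fro2 ((I1 - P) ** E ** b)" .
  have "fro2 T3 \<le> fro2 ((I2 - Q) ** ct E ** ct a) * \<alpha>"
    unfolding T3alt \<alpha>_def by (rule fro2_mult_right)
  also have "fro2 ((I2 - Q) ** ct E ** ct a) = fro2 (a ** E ** (I2 - Q))"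
    using fro2_ct[of "a ** E ** (I2 - Q)"] by (simp add: ct_mult ctIQ matrix_mul_assoc)
  finally have f3: "fro2 T3 \<le> \<alpha> * fro2 (a ** E ** (I2 - Q))" by (simp add: mult.commute)

  have "E ** b = P ** (E ** b) + (I1 - P) ** (E ** b)" by (simp add: mm_diff_right I1_def)
  moreover have "cip (P ** (E ** b)) ((I1 - P) ** (E ** b)) = 0"
    by (simp only: cip_left ctIP) (simp add: matrix_mul_assoc IP_P)
  ultimately have s1: "fro2 (E ** b) = fro2 (P ** E ** b) + fro2 ((I1 - P) ** E ** b)"
    by (metis fro2_add matrix_mul_assoc mult_zero_right zero_complex.simps(1) add_0_right)
  have "a ** E = a ** E ** Q + a ** E ** (I2 - Q)"
    by (simp add: mm_diff_left I2_def)
  moreover have "cip (a ** E ** Q) (a ** E ** (I2 - Q)) = 0"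
    by (simp only: cip_right ctIQ) (simp add: Q_IQ flip: matrix_mul_assoc)
  ultimately have s2: "fro2 (a ** E) = fro2 (a ** E ** Q) + fro2 (a ** E ** (I2 - Q))"
    by (metis fro2_add mult_zero_right zero_complex.simps(1) add_0_right)

  have "fro2 (a ** E ** b) = fro2 (a ** (P ** E ** b))" using aP by (simp add: matrix_mul_assoc)
  also have "\<dots> \<le> \<alpha> * fro2 (P ** E ** b)" unfolding \<alpha>_def by (rule fro2_mult_left)
  finally have g1: "fro2 (a ** E ** b) / \<alpha> \<le> fro2 (P ** E ** b)"
    using al fro2_nonneg by (intro div_le_aux) auto
  have "fro2 (a ** E ** b) = fro2 ((a ** E ** Q) ** b)" using Qb by (simp add: matrix_mul_assoc[symmetric])
  also have "\<dots> \<le> fro2 (a ** E ** Q) * \<beta>" unfolding \<beta>_def by (rule fro2_mult_right)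
  finally have g2: "fro2 (a ** E ** b) / \<beta> \<le> fro2 (a ** E ** Q)"
    using be fro2_nonneg by (intro div_le_aux) (auto simp: mult.commute)

  have h2: "\<beta> * fro2 ((I1 - P) ** E ** b) \<le> \<beta> * (fro2 (E ** b) - fro2 (a ** E ** b) / \<alpha>)"
    using s1 g1 be by (intro mult_left_mono) auto
  have h3: "\<alpha> * fro2 (a ** E ** (I2 - Q)) \<le> \<alpha> * (fro2 (a ** E) - fro2 (a ** E ** b) / \<beta>)"
    using s2 g2 al by (intro mult_left_mono) auto
  show ?thesis using fD f1 f2 f3 h2 h3 by linarith
qed




theorem corollary3p4:
  fixes A B E :: "complex^'n^'m" and r s :: nat
  assumes "rank A = r" and "rank B = s" and "E = B - A"
  defines "\<gamma>1 \<equiv> (spec_norm (mp_inverse A))\<^sup>2 *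
              ((frob_norm (mp_inverse A ** E))\<^sup>2
                 - (frob_norm (mp_inverse A ** E ** mp_inverse B))\<^sup>2 / (spec_norm (mp_inverse B))\<^sup>2)
            + (spec_norm (mp_inverse B))\<^sup>2 *
              ((frob_norm (E ** mp_inverse B))\<^sup>2
                 - (frob_norm (mp_inverse A ** E ** mp_inverse B))\<^sup>2 / (spec_norm (mp_inverse A))\<^sup>2)"
    and "\<gamma>2 \<equiv> (spec_norm (mp_inverse A))\<^sup>2 *
              ((frob_norm (E ** mp_inverse A))\<^sup>2
                 - (frob_norm (mp_inverse B ** E ** mp_inverse A))\<^sup>2 / (spec_norm (mp_inverse B))\<^sup>2)
            + (spec_norm (mp_inverse B))\<^sup>2 *
              ((frob_norm (mp_inverse B ** E))\<^sup>2
                 - (frob_norm (mp_inverse B ** E ** mp_inverse A))\<^sup>2 / (spec_norm (mp_inverse A))\<^sup>2)"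
  shows "(frob_norm (mp_inverse B - mp_inverse A))\<^sup>2
           \<le> min (\<gamma>1 + (frob_norm (mp_inverse B ** E ** mp_inverse A))\<^sup>2)
                 (\<gamma>2 + (frob_norm (mp_inverse A ** E ** mp_inverse B))\<^sup>2)"
proof -
  note m1 = main_bound[OF assms(3)]
  have AB: "A - B = - E" using assms(3) by simp
  note m2 = main_bound[OF refl, of A B, unfolded AB]
  have "mp_inverse A - mp_inverse B = - (mp_inverse B - mp_inverse A)" by simp
  hence e: "fro2 (mp_inverse A - mp_inverse B) = fro2 (mp_inverse B - mp_inverse A)"
    by (metis fro2_uminus)
  note m2' = m2[unfolded e mm_uminus_left mm_uminus_right fro2_uminus]
  show ?thesis unfolding \<gamma>1_def \<gamma>2_def frob_sq
    using m1 m2' by linarith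
qed


end
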